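(* Let $n\ge2$ and let $\mathcal{I}^{(k)}_{CCZ}$ be the set of channels $\rho\mapsto U\rho U^\dagger$ with $U=H^{\otimes n}DH^{\otimes n}$, where $D$ is a product of gates from $\{Z,CZ,CCZ\}$ (acting on arbitrary qubits) containing at most $k$ $CCZ$ gates. There is an absolute constant $C$ such that for every sample $S=(z_1,\ldots,z_m)$ with $z_i\in\mathbb{F}_2^n\times\mathbb{F}_2^n$, \[ \hat{R}_S(\mathcal{F}(\mathcal{I}^{(k)}_{CCZ}))\le\frac{C\,(n^2+k\log n)^{1/2}}{\sqrt m}\max_{\Phi\in\mathcal{I}^{(k)}_{CCZ}}\|\vec f_\Phi\|_\infty . \]
   Context: $H$ is the Hadamard gate, $Z=\mathrm{diag}(1,-1)$, $CZ$ the controlled-$Z$ gate, $CCZ$ the doubly controlled-$Z$ gate on three qubits. For a channel $\Phi$ on $n$ qubits, $f_\Phi(x,y)=\mathrm{Tr}[\Phi(|x\rangle\langle x|)\,|y\rangle\langle y|]$ for $x,y\in\mathbb{F}_2^n$; $\mathcal{F}(\Omega)=\{f_\Phi:\Phi\in\Omega\}$; $\vec f_\Phi=(f_\Phi(z_1),\ldots,f_\Phi(z_m))$. Empirical Rademacher complexity: $\hat{R}_S(\mathcal{G})=\mathbb{E}_{\epsilon}[\sup_{g\in\mathcal{G}}\frac1m\sum_i\epsilon_i g(z_i)]$, $\epsilon_i$ i.i.d. uniform on $\{\pm1\}$. *)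

theory Defs
  imports Complex_Main
begin

text \<open>Bit strings of length n represent F_2^n; matrices on n qubits are functions
  on pairs of bit strings (indices restricted to length-n strings).\<close>

definition bv :: "nat \<Rightarrow> bool list set" where
  "bv n = {xs. length xs = n}"

type_synonym cmat = "bool list \<Rightarrow> bool list \<Rightarrow> complex"
type_synonym channel = "cmat \<Rightarrow> cmat"

definition mmult :: "nat \<Rightarrow> cmat \<Rightarrow> cmat \<Rightarrow> cmat" where
  "mmult n A B = (\<lambda>x y. \<Sum>z\<in>bv n. A x z * B z y)"

definition madj :: "cmat \<Rightarrow> cmat" where
  "madj A = (\<lambda>x y. cnj (A y x))"

definition mtrace :: "nat \<Rightarrow> cmat \<Rightarrow> complex" where
  "mtrace n A = (\<Sum>x\<in>bv n. A x x)"

definition ketbra :: "bool list \<Rightarrow> cmat" where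
  "ketbra x = (\<lambda>a b. if a = x \<and> b = x then 1 else 0)"

definition diag_mat :: "(bool list \<Rightarrow> complex) \<Rightarrow> cmat" where
  "diag_mat d = (\<lambda>a b. if a = b then d a else 0)"

definition dotF2 :: "bool list \<Rightarrow> bool list \<Rightarrow> bool" where
  "dotF2 x y = odd (length (filter (\<lambda>(a,b). a \<and> b) (zip x y)))"

definition hadamard_n :: "nat \<Rightarrow> cmat" where
  "hadamard_n n = (\<lambda>x y. complex_of_real (1 / sqrt (2 ^ n)) * (if dotF2 x y then -1 else 1))"

datatype gate = Zg nat | CZg nat nat | CCZg nat nat nat

fun valid_gate :: "nat \<Rightarrow> gate \<Rightarrow> bool" where
  "valid_gate n (Zg i) = (i < n)"
| "valid_gate n (CZg i j) = (i < n \<and> j < n \<and> i \<noteq> j)"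
| "valid_gate n (CCZg i j l) = (i < n \<and> j < n \<and> l < n \<and> distinct [i, j, l])"

fun is_CCZ :: "gate \<Rightarrow> bool" where
  "is_CCZ (CCZg _ _ _) = True"
| "is_CCZ _ = False"

fun gate_phase :: "gate \<Rightarrow> bool list \<Rightarrow> bool" where
  "gate_phase (Zg i) z = z ! i"
| "gate_phase (CZg i j) z = (z ! i \<and> z ! j)"
| "gate_phase (CCZg i j l) z = (z ! i \<and> z ! j \<and> z ! l)"

definition gate_mat :: "gate \<Rightarrow> cmat" where
  "gate_mat g = diag_mat (\<lambda>z. if gate_phase g z then -1 else 1)"

definition circuit_mat :: "nat \<Rightarrow> gate list \<Rightarrow> cmat" where
  "circuit_mat n gs = foldr (mmult n) (map gate_mat gs) (diag_mat (\<lambda>_. 1))"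

definition unitary_channel :: "nat \<Rightarrow> cmat \<Rightarrow> channel" where
  "unitary_channel n U = (\<lambda>\<rho>. mmult n (mmult n U \<rho>) (madj U))"

definition I_CCZ :: "nat \<Rightarrow> nat \<Rightarrow> channel set" where
  "I_CCZ n k = {unitary_channel n (mmult n (mmult n (hadamard_n n) (circuit_mat n gs)) (hadamard_n n))
     | gs. (\<forall>g\<in>set gs. valid_gate n g) \<and> length (filter is_CCZ gs) \<le> k}"

text \<open>f_Phi(x,y) = Tr[Phi(|x><x|) |y><y|] (real-valued; we take the real part).\<close>
definition f_chan :: "nat \<Rightarrow> channel \<Rightarrow> bool list \<times> bool list \<Rightarrow> real" where
  "f_chan n \<Phi> = (\<lambda>(x, y). Re (mtrace n (mmult n (\<Phi> (ketbra x)) (ketbra y))))"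

definition F_class :: "nat \<Rightarrow> channel set \<Rightarrow> (bool list \<times> bool list \<Rightarrow> real) set" where
  "F_class n \<Omega> = f_chan n ` \<Omega>"

definition emp_rademacher :: "('z \<Rightarrow> real) set \<Rightarrow> 'z list \<Rightarrow> real" where
  "emp_rademacher G S =
     (\<Sum>\<epsilon>\<in>{\<epsilon> :: real list. length \<epsilon> = length S \<and> set \<epsilon> \<subseteq> {-1, 1}}.
        (SUP g\<in>G. (\<Sum>i<length S. \<epsilon> ! i * g (S ! i)) / real (length S))) / 2 ^ length S"

end

theory Submission
  imports Defs "HOL-Probability.Hoeffding"
begin


lemma cosh_le_pos: assumes "(x::real) \<ge> 0" shows "exp x + exp (-x) \<le> 2 * exp (x^2/2)"
proof -
  define e where "e = exp (2*x)"
  have e0: "e > 0" unfolding e_def by simp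
  have h0: "-(2*x) * (1/2) + ln (1 + (1/2) * (e - 1)) \<le> (2*x)^2/8"
    unfolding e_def by (rule Hoeffdings_lemma_aux) (use assms in auto)
  have q: "1 + (1/2) * (e - 1) = (1 + e)/2" by (simp add: right_diff_distrib)
  have sq: "(2*x)^2/8 = x^2/2" by (simp add: power2_eq_square)
  have h: "ln ((1 + e)/2) \<le> x + x^2/2" using h0 unfolding q sq by simp
  have pos: "(1 + e)/2 > 0" using e0 by simp
  have "(1 + e)/2 = exp (ln ((1 + e)/2))" using pos by simp
  also have "\<dots> \<le> exp (x + x^2/2)" using h by simp
  finally have A: "(1 + e)/2 \<le> exp (x + x^2/2)" .
  have B: "exp (-x) * e = exp x" unfolding e_def by (simp flip: exp_add)
  have "exp x + exp (-x) = exp (-x) * (1 + e)" using B by (simp add: distrib_left)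
  also have "\<dots> \<le> exp (-x) * (2 * exp (x + x^2/2))" using A by (intro mult_left_mono) auto
  also have "\<dots> = 2 * (exp (-x) * exp (x + x^2/2))" by simp
  also have "exp (-x) * exp (x + x^2/2) = exp (x^2/2)" by (simp flip: exp_add)
  finally show ?thesis by simp
qed

lemma cosh_le: "exp (x::real) + exp (-x) \<le> 2 * exp (x^2/2)"
proof (cases "x \<ge> 0")
  case True then show ?thesis by (rule cosh_le_pos)
next
  case False then show ?thesis using cosh_le_pos[of "-x"] by simp
qed

definition signs :: "nat \<Rightarrow> real list set" where
  "signs m = {\<epsilon>. length \<epsilon> = m \<and> set \<epsilon> \<subseteq> {-1, 1}}"

lemma signs_finite: "finite (signs m)"
  unfolding signs_def using finite_lists_length_eq[of "{-1,1::real}" m] by (simp add: conj_commute)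

lemma signs_card: "card (signs m) = 2^m"
  unfolding signs_def using card_lists_length_eq[of "{-1,1::real}" m] by (simp add: conj_commute numeral_2_eq_2)

lemma signs_Suc: "signs (Suc m) = (\<lambda>(e,\<epsilon>). e#\<epsilon>) ` ({-1,1} \<times> signs m)"
proof
  show "signs (Suc m) \<subseteq> (\<lambda>(e,\<epsilon>). e#\<epsilon>) ` ({-1,1} \<times> signs m)"
  proof
    fix x assume "x \<in> signs (Suc m)"
    then obtain e t where "x = e # t" "e \<in> {-1,1}" "t \<in> signs m"
      unfolding signs_def by (cases x) auto
    then show "x \<in> (\<lambda>(e,\<epsilon>). e#\<epsilon>) ` ({-1,1} \<times> signs m)" by force
  qed
qed (auto simp: signs_def)

lemma signs_sum_Suc:
  "(\<Sum>\<epsilon>\<in>signs (Suc m). F \<epsilon>) = (\<Sum>e\<in>{-1,1::real}. \<Sum>\<epsilon>\<in>signs m. F (e#\<epsilon>))"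
proof -
  have inj: "inj_on (\<lambda>(e,\<epsilon>). e#\<epsilon>) ({-1,1::real} \<times> signs m)" by (auto simp: inj_on_def)
  have "(\<Sum>\<epsilon>\<in>signs (Suc m). F \<epsilon>) = (\<Sum>p\<in>{-1,1::real} \<times> signs m. F (fst p # snd p))"
    unfolding signs_Suc by (subst sum.reindex[OF inj]) (simp add: case_prod_beta)
  also have "\<dots> = (\<Sum>e\<in>{-1,1::real}. \<Sum>\<epsilon>\<in>signs m. F (e#\<epsilon>))"
    unfolding sum.cartesian_product by (simp add: case_prod_beta)
  finally show ?thesis .
qed

lemma mgf_bound:
  "(\<Sum>\<epsilon>\<in>signs m. exp (\<Sum>i<m. \<epsilon>!i * b i)) \<le> 2^m * exp (\<Sum>i<m. (b i)^2/2)"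
proof (induction m arbitrary: b)
  case 0
  have "signs 0 = {[]}" by (auto simp: signs_def)
  then show ?case by simp
next
  case (Suc m)
  let ?S = "(\<Sum>\<epsilon>\<in>signs m. exp (\<Sum>i<m. \<epsilon>!i * b (Suc i)))"
  have eq: "exp (\<Sum>i<Suc m. (e#\<epsilon>)!i * b i) = exp (e * b 0) * exp (\<Sum>i<m. \<epsilon>!i * b (Suc i))" for e \<epsilon>
    by (simp only: sum.lessThan_Suc_shift) (simp add: exp_add)
  have "(\<Sum>\<epsilon>\<in>signs (Suc m). exp (\<Sum>i<Suc m. \<epsilon>!i * b i)) = (\<Sum>e\<in>{-1,1::real}. exp (e * b 0) * ?S)"
    unfolding signs_sum_Suc eq by (simp only: sum_distrib_left)
  also have "\<dots> = exp (- b 0) * ?S + exp (b 0) * ?S" by simp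
  also have "\<dots> = (exp (b 0) + exp (- b 0)) * ?S" by (simp only: distrib_right add.commute)
  also have "\<dots> \<le> (2 * exp ((b 0)^2/2)) * (2^m * exp (\<Sum>i<m. (b (Suc i))^2/2))"
  proof (rule mult_mono)
    show "?S \<le> 2^m * exp (\<Sum>i<m. (b (Suc i))^2/2)" by (rule Suc.IH)
    show "exp (b 0) + exp (- b 0) \<le> 2 * exp ((b 0)^2/2)" by (rule cosh_le)
    show "0 \<le> 2 * exp ((b 0)^2/2)" by simp
    show "0 \<le> ?S" by (rule sum_nonneg) simp
  qed
  also have "\<dots> = 2^Suc m * exp (\<Sum>i<Suc m. (b i)^2/2)"
    by (simp only: sum.lessThan_Suc_shift) (simp add: exp_add)
  finally show ?case .
qed

lemma aux_div_sq: "(s::real) \<noteq> 0 \<Longrightarrow> x / s * (s * s) = x * s" by (simp add: field_simps power2_eq_square)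

lemma sqrt_opt1: fixes L B :: real assumes "L > 0" "B > 0"
  shows "L / sqrt (L / B) = sqrt (L * B)" 
proof -
  have a: "sqrt L \<noteq> 0" using assms by auto
  have e: "L = sqrt L * sqrt L" using assms by simp
  have "L / sqrt (L / B) = L * sqrt B / sqrt L" by (simp add: real_sqrt_divide)
  also have "\<dots> = sqrt L * (sqrt L * sqrt B) / sqrt L" by (metis e mult.assoc)
  also have "\<dots> = sqrt L * sqrt B" using a by (rule nonzero_mult_div_cancel_left)
  finally show ?thesis by (simp add: real_sqrt_mult)
qed

lemma sqrt_opt2: fixes L B :: real assumes "L > 0" "B > 0"
  shows "sqrt (L / B) * B = sqrt (L * B)" 
proof -
  have a: "sqrt B \<noteq> 0" using assms by auto
  have e: "B = sqrt B * sqrt B" using assms by simp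
  have "sqrt (L / B) * B = sqrt L / sqrt B * (sqrt B * sqrt B)" by (metis e real_sqrt_divide)
  also have "\<dots> = sqrt L * sqrt B" using a by (rule aux_div_sq)
  finally show ?thesis by (simp add: real_sqrt_mult)
qed

lemma div_lt_aux: fixes A B :: real assumes "A > 0" "B \<ge> 0" shows "A * B / (2*B+1) < A"
proof -
  have "A * B < A * (2*B+1)" using assms by (intro mult_strict_left_mono) auto
  then show ?thesis using assms by (subst pos_divide_less_eq) auto
qed

lemma opt_lemma:
  fixes A L B :: real
  assumes "L \<ge> 0" "B \<ge> 0" "\<And>l. l > 0 \<Longrightarrow> A \<le> L / l + l * B"
  shows "A \<le> 2 * sqrt (L * B)"
proof (cases "L > 0 \<and> B > 0")
  case True
  define l where "l = sqrt (L / B)"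
  have lp: "l > 0" using True by (simp add: l_def)
  have "L / l = sqrt (L * B)" using True sqrt_opt1 unfolding l_def by blast
  moreover have "l * B = sqrt (L * B)" using True sqrt_opt2 unfolding l_def by blast
  ultimately show ?thesis using assms(3)[OF lp] by simp
next
  case False
  hence LB: "L * B = 0" using assms by auto
  show ?thesis
  proof (rule ccontr)
    assume "\<not> ?thesis"
    hence A: "A > 0" using LB by simp
    show False
    proof (cases "L = 0")
      case True
      define l where "l = A / (2*B+1)"
      have lp: "l > 0" using A assms by (simp add: l_def)
      have "l * B = A * B / (2*B+1)" unfolding l_def by simp
      also have "\<dots> < A" using div_lt_aux[OF A assms(2)] by simp
      finally have "l * B < A" .
      then show False using assms(3)[OF lp] True by simp
    next
      case False
      hence B0: "B = 0" using LB by simp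
      define l where "l = (2*L+1) / A"
      have lp: "l > 0" using A assms by (simp add: l_def)
      have "L / l = A * L / (2*L+1)" unfolding l_def using A by simp
      also have "\<dots> < A" using div_lt_aux[OF A assms(1)] by simp
      finally have "L / l < A" .
      then show False using assms(3)[OF lp] B0 by simp
    qed
  qed
qed



lemma jensen_ln:
  fixes Z :: "'a \<Rightarrow> real"
  assumes fin: "finite A" and ne: "A \<noteq> {}" and pos: "\<And>a. a \<in> A \<Longrightarrow> Z a > 0"
  shows "(\<Sum>a\<in>A. ln (Z a)) / card A \<le> ln ((\<Sum>a\<in>A. Z a) / card A)"
proof -
  define c where "c = real (card A)"
  have c0: "c > 0" using fin ne by (simp add: c_def card_gt_0_iff)
  have w: "(\<Sum>a\<in>A. 1 / c) = 1" using c0 by (simp add: c_def)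
  have "exp (\<Sum>a\<in>A. (1/c) *\<^sub>R ln (Z a)) \<le> (\<Sum>a\<in>A. (1/c) * exp (ln (Z a)))"
    by (rule convex_on_sum[OF fin ne exp_convex w]) (use c0 in auto)
  also have "\<dots> = (\<Sum>a\<in>A. Z a) / c"
    using pos by (simp add: sum_divide_distrib)
  finally have E: "exp ((\<Sum>a\<in>A. ln (Z a)) / c) \<le> (\<Sum>a\<in>A. Z a) / c"
    by (simp add: sum_divide_distrib)
  have Spos: "(\<Sum>a\<in>A. Z a) / c > 0" using c0 pos fin ne by (intro divide_pos_pos sum_pos) auto
  have "(\<Sum>a\<in>A. ln (Z a)) / c = ln (exp ((\<Sum>a\<in>A. ln (Z a)) / c))" by simp
  also have "\<dots> \<le> ln ((\<Sum>a\<in>A. Z a) / c)" using E Spos by (subst ln_le_cancel_iff) auto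
  finally show ?thesis by (simp add: c_def)
qed


lemma sum_sup_bound:
  fixes G :: "('z \<Rightarrow> real) set" and S :: "'z list"
  assumes fin: "finite G" and ne: "G \<noteq> {}" and m: "length S \<ge> 1" and M: "M \<ge> 0"
    and bnd: "\<forall>g\<in>G. \<forall>i<length S. \<bar>g (S!i)\<bar> \<le> M" and l: "l > 0"
  shows "emp_rademacher G S \<le> (ln (real (card G)) / real (length S)) / l + l * (M^2/2)"
proof -
  define m where "m = length S"
  have m0: "real m > 0" using m unfolding m_def by (cases S) auto
  define X where "X g (\<epsilon>::real list) = (\<Sum>i<m. \<epsilon>!i * g (S!i))" for g \<epsilon>
  define Z where "Z \<epsilon> = (\<Sum>g\<in>G. exp (l * X g \<epsilon>))" for \<epsilon>
  define N where "N = real (card G)"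
  have N0: "N > 0" using fin ne by (simp add: N_def card_gt_0_iff)
  have Zpos: "Z \<epsilon> > 0" for \<epsilon> unfolding Z_def using fin ne by (intro sum_pos) auto
  have emp: "emp_rademacher G S = (\<Sum>\<epsilon>\<in>signs m. (SUP g\<in>G. X g \<epsilon> / real m)) / 2^m"
    unfolding emp_rademacher_def signs_def X_def m_def by simp
  have sup_le: "(SUP g\<in>G. X g \<epsilon> / real m) \<le> ln (Z \<epsilon>) / (l * real m)" for \<epsilon>
  proof (rule cSUP_least[OF ne])
    fix g assume g: "g \<in> G"
    have "exp (l * X g \<epsilon>) \<le> Z \<epsilon>" unfolding Z_def
      using fin g by (intro member_le_sum) auto
    hence "l * X g \<epsilon> \<le> ln (Z \<epsilon>)" using Zpos[of \<epsilon>]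
      by (metis exp_le_cancel_iff exp_ln)
    hence "l * X g \<epsilon> / (l * real m) \<le> ln (Z \<epsilon>) / (l * real m)"
      using l m0 by (intro divide_right_mono) auto
    thus "X g \<epsilon> / real m \<le> ln (Z \<epsilon>) / (l * real m)" using l by simp
  qed
  have card_s: "real (card (signs m)) = 2^m" by (simp add: signs_card)
  have sne: "signs m \<noteq> {}" using signs_card[of m] by (metis card.empty power_eq_0_iff zero_neq_numeral)
  have "emp_rademacher G S \<le> (\<Sum>\<epsilon>\<in>signs m. ln (Z \<epsilon>) / (l * real m)) / 2^m"
    unfolding emp by (intro divide_right_mono sum_mono sup_le) auto
  also have "\<dots> = ((\<Sum>\<epsilon>\<in>signs m. ln (Z \<epsilon>)) / card (signs m)) / (l * real m)"
    by (simp add: card_s sum_divide_distrib mult.commute)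
  also have "\<dots> \<le> ln ((\<Sum>\<epsilon>\<in>signs m. Z \<epsilon>) / card (signs m)) / (l * real m)"
  proof (intro divide_right_mono jensen_ln)
    show "signs m \<noteq> {}" by (rule sne)
  qed (use Zpos signs_finite l m0 in auto)
  also have "\<dots> \<le> ln (N * exp (real m * l^2 * M^2 / 2)) / (l * real m)"
  proof (intro divide_right_mono ln_mono)
    have "(\<Sum>\<epsilon>\<in>signs m. Z \<epsilon>) = (\<Sum>g\<in>G. \<Sum>\<epsilon>\<in>signs m. exp (\<Sum>i<m. \<epsilon>!i * (l * g (S!i))))"
      unfolding Z_def X_def by (subst sum.swap) (simp add: sum_distrib_left mult.left_commute)
    also have "\<dots> \<le> (\<Sum>g\<in>G. 2^m * exp (\<Sum>i<m. (l * g (S!i))^2/2))"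
      by (intro sum_mono mgf_bound)
    also have "\<dots> \<le> (\<Sum>g\<in>G. 2^m * exp (real m * l^2 * M^2 / 2))"
    proof (intro sum_mono mult_left_mono exp_mono)
      fix g assume g: "g \<in> G"
      have "(\<Sum>i<m. (l * g (S!i))^2/2) \<le> (\<Sum>i<m. l^2 * M^2 / 2)"
      proof (intro sum_mono)
        fix i assume "i \<in> {..<m}"
        hence "\<bar>g (S!i)\<bar> \<le> M" using bnd g by (simp add: m_def)
        hence "(g (S!i))^2 \<le> M^2" by (metis abs_ge_zero power2_abs power_mono)
        thus "(l * g (S!i))^2/2 \<le> l^2 * M^2 / 2"
          by (simp add: power_mult_distrib mult_left_mono)
      qed
      thus "(\<Sum>i<m. (l * g (S!i))^2/2) \<le> real m * l^2 * M^2 / 2" by simp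
    qed simp
    also have "\<dots> = N * 2^m * exp (real m * l^2 * M^2 / 2)" by (simp add: N_def)
    finally show "(\<Sum>\<epsilon>\<in>signs m. Z \<epsilon>) / real (card (signs m)) \<le> N * exp (real m * l^2 * M^2 / 2)"
      by (simp add: card_s divide_le_eq mult.commute mult.left_commute)
    show "0 < (\<Sum>\<epsilon>\<in>signs m. Z \<epsilon>) / real (card (signs m))"
      by (intro divide_pos_pos sum_pos) (auto simp: sne signs_finite Zpos card_s)
  qed (use l m0 in auto)
  also have "\<dots> = (ln N + real m * l^2 * M^2 / 2) / (l * real m)"
    using N0 by (simp add: ln_mult)
  also have "\<dots> = (ln N / real m) / l + l * (M^2/2)"
    using l m0 by (simp add: field_simps power2_eq_square)
  finally show ?thesis by (simp add: N_def m_def)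
qed


lemma massart:
  fixes G :: "('z \<Rightarrow> real) set" and S :: "'z list"
  assumes fin: "finite G" and ne: "G \<noteq> {}" and m: "length S \<ge> 1" and M: "M \<ge> 0"
    and bnd: "\<forall>g\<in>G. \<forall>i<length S. \<bar>g (S!i)\<bar> \<le> M"
  shows "emp_rademacher G S \<le> M * sqrt (2 * ln (real (card G))) / sqrt (real (length S))"
proof -
  define N where "N = real (card G)"
  define m where "m = real (length S)"
  have m0: "m > 0" using m unfolding m_def by (cases S) auto
  have N1: "N \<ge> 1" using fin ne by (simp add: N_def Suc_le_eq card_gt_0_iff)
  have L0: "ln N / m \<ge> 0" using N1 m0 by simp
  have "emp_rademacher G S \<le> 2 * sqrt ((ln N / m) * (M^2/2))"
    by (rule opt_lemma[OF L0]) (use sum_sup_bound[OF fin ne m M bnd] in \<open>auto simp: N_def m_def\<close>)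
  also have "2 * sqrt ((ln N / m) * (M^2/2)) = sqrt (M^2 * (2 * ln N) / m)"
  proof -
    have "2 * sqrt ((ln N / m) * (M^2/2)) = sqrt 4 * sqrt ((ln N / m) * (M^2/2))" by simp
    also have "\<dots> = sqrt (4 * ((ln N / m) * (M^2/2)))" by (simp only: real_sqrt_mult)
    also have "4 * ((ln N / m) * (M^2/2)) = M^2 * (2 * ln N) / m" by (simp add: field_simps)
    finally show ?thesis .
  qed
  also have "\<dots> = M * sqrt (2 * ln N) / sqrt m"
    using M by (simp add: real_sqrt_mult real_sqrt_divide)
  finally show ?thesis by (simp add: N_def m_def)
qed



lemma bv_finite: "finite (bv n)"
proof -
  have "bv n = {xs. set xs \<subseteq> (UNIV::bool set) \<and> length xs = n}" by (auto simp: bv_def)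
  thus ?thesis using finite_lists_length_eq[of "UNIV::bool set" n] by simp
qed

definition agree :: "nat \<Rightarrow> cmat \<Rightarrow> cmat \<Rightarrow> bool" where
  "agree n A B \<longleftrightarrow> (\<forall>x\<in>bv n. \<forall>y\<in>bv n. A x y = B x y)"

lemma agree_mmult: "agree n A A' \<Longrightarrow> agree n B B' \<Longrightarrow> agree n (mmult n A B) (mmult n A' B')"
  unfolding agree_def mmult_def by (auto intro!: sum.cong)

lemma agree_madj: "agree n A A' \<Longrightarrow> agree n (madj A) (madj A')"
  unfolding agree_def madj_def by auto

lemma agree_refl: "agree n A A" unfolding agree_def by auto

lemma f_chan_agree:
  assumes "agree n U U'"
  shows "f_chan n (unitary_channel n U) = f_chan n (unitary_channel n U')"
proof -
  have "agree n (unitary_channel n U \<rho>) (unitary_channel n U' \<rho>)" for \<rho>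
    unfolding unitary_channel_def using assms
    by (intro agree_mmult agree_madj agree_refl)
  hence "mtrace n (mmult n (unitary_channel n U \<rho>) \<sigma>) = mtrace n (mmult n (unitary_channel n U' \<rho>) \<sigma>)" for \<rho> \<sigma>
    using agree_mmult[OF _ agree_refl, of n "unitary_channel n U \<rho>" "unitary_channel n U' \<rho>" \<sigma>]
    unfolding mtrace_def agree_def by (auto intro!: sum.cong)
  thus ?thesis unfolding f_chan_def by auto
qed

definition par :: "gate list \<Rightarrow> bool list \<Rightarrow> bool" where
  "par gs z = odd (length (filter (\<lambda>g. gate_phase g z) gs))"

definition sgnd :: "(bool list \<Rightarrow> bool) \<Rightarrow> cmat" where
  "sgnd d = diag_mat (\<lambda>z. if d z then -1 else 1)"

lemma circuit_agree: "agree n (circuit_mat n gs) (sgnd (par gs))"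
proof (induction gs)
  case Nil
  then show ?case by (simp add: agree_def circuit_mat_def sgnd_def par_def)
next
  case (Cons g gs)
  show ?case unfolding agree_def
  proof (intro ballI)
    fix x y assume x: "x \<in> bv n" and y: "y \<in> bv n"
    have "circuit_mat n (g#gs) x y = (\<Sum>z\<in>bv n. gate_mat g x z * circuit_mat n gs z y)"
      by (simp add: circuit_mat_def mmult_def)
    also have "\<dots> = (\<Sum>z\<in>bv n. gate_mat g x z * sgnd (par gs) z y)"
      using Cons y by (intro sum.cong) (auto simp: agree_def)
    also have "\<dots> = (\<Sum>z\<in>bv n. if z = x then gate_mat g x x * sgnd (par gs) x y else 0)"
      by (intro sum.cong) (auto simp: gate_mat_def diag_mat_def)
    also have "\<dots> = gate_mat g x x * sgnd (par gs) x y"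
      using x bv_finite[of n] by (simp add: sum.delta')
    also have "\<dots> = sgnd (par (g#gs)) x y"
      by (auto simp: gate_mat_def diag_mat_def sgnd_def par_def)
    finally show "circuit_mat n (g#gs) x y = sgnd (par (g#gs)) x y" .
  qed
qed


definition oddset :: "'a list \<Rightarrow> 'a set" where
  "oddset xs = {g \<in> set xs. odd (count_list xs g)}"

lemma oddset_finite: "finite (oddset xs)"
  unfolding oddset_def by simp

lemma oddset_Cons:
  "oddset (x#xs) = (if x \<in> oddset xs then oddset xs - {x} else insert x (oddset xs))"
  unfolding oddset_def by (auto simp: count_list_0_iff)

lemma par_oddset: "odd (length (filter P xs)) \<longleftrightarrow> odd (card {g\<in>oddset xs. P g})"
proof (induction xs)
  case Nil
  then show ?case by (simp add: oddset_def)
next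
  case (Cons x xs)
  have fin: "finite {g\<in>oddset xs. P g}" using oddset_finite[of xs] by simp
  show ?case
  proof (cases "P x")
    case True
    show ?thesis
    proof (cases "x \<in> oddset xs")
      case True2: True
      have e: "{g\<in>oddset (x#xs). P g} = {g\<in>oddset xs. P g} - {x}"
        using True2 by (auto simp: oddset_Cons)
      have c: "card {g\<in>oddset xs. P g} \<ge> 1" using True True2 fin
        by (metis (mono_tags, lifting) One_nat_def Suc_leI card_gt_0_iff empty_iff mem_Collect_eq)
      have "card {g\<in>oddset (x#xs). P g} = card {g\<in>oddset xs. P g} - 1"
        unfolding e using True True2 by (simp add: card_Diff_singleton)
      then show ?thesis using Cons c True by (auto simp: odd_pos)
    next
      case False2: False
      have e: "{g\<in>oddset (x#xs). P g} = insert x {g\<in>oddset xs. P g}"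
        using False2 True by (auto simp: oddset_Cons)
      have "card {g\<in>oddset (x#xs). P g} = Suc (card {g\<in>oddset xs. P g})"
        unfolding e using False2 fin by simp
      then show ?thesis using Cons True by simp
    qed
  next
    case False
    have e: "{g\<in>oddset (x#xs). P g} = {g\<in>oddset xs. P g}"
      using False by (auto simp: oddset_Cons)
    then show ?thesis using Cons False by simp
  qed
qed


definition V2 :: "nat \<Rightarrow> gate set" where "V2 n = {g. valid_gate n g \<and> \<not> is_CCZ g}"
definition V3 :: "nat \<Rightarrow> gate set" where "V3 n = {g. valid_gate n g \<and> is_CCZ g}"
definition KS :: "nat \<Rightarrow> nat \<Rightarrow> gate set set" where "KS n k = {B. B \<subseteq> V3 n \<and> card B \<le> k}"
definition TS :: "nat \<Rightarrow> nat \<Rightarrow> gate set set" where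
  "TS n k = {T. T \<subseteq> {g. valid_gate n g} \<and> card {g\<in>T. is_CCZ g} \<le> k}"

lemma V2_sub: "V2 n \<subseteq> Zg ` {..<n} \<union> (\<lambda>(i,j). CZg i j) ` ({..<n}\<times>{..<n})"
proof
  fix g assume "g \<in> V2 n"
  then show "g \<in> Zg ` {..<n} \<union> (\<lambda>(i,j). CZg i j) ` ({..<n}\<times>{..<n})"
  proof (cases g)
    case (Zg i) then show ?thesis using \<open>g \<in> V2 n\<close> by (auto simp: V2_def)
  next
    case (CZg i j)
    then have "i < n" "j < n" using \<open>g \<in> V2 n\<close> by (auto simp: V2_def)
    then have "(i,j) \<in> {..<n}\<times>{..<n}" by simp
    then have "g \<in> (\<lambda>(i,j). CZg i j) ` ({..<n}\<times>{..<n})" by (rule rev_image_eqI) (simp add: CZg)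
    then show ?thesis by (rule UnI2)
  next
    case (CCZg i j l) then show ?thesis using \<open>g \<in> V2 n\<close> by (auto simp: V2_def)
  qed
qed

lemma V3_sub: "V3 n \<subseteq> (\<lambda>(i,j,l). CCZg i j l) ` ({..<n}\<times>{..<n}\<times>{..<n})"
proof
  fix g assume "g \<in> V3 n"
  then show "g \<in> (\<lambda>(i,j,l). CCZg i j l) ` ({..<n}\<times>{..<n}\<times>{..<n})"
  proof (cases g)
    case (Zg i) then show ?thesis using \<open>g \<in> V3 n\<close> by (auto simp: V3_def)
  next
    case (CZg i j) then show ?thesis using \<open>g \<in> V3 n\<close> by (auto simp: V3_def)
  next
    case (CCZg i j l)
    then have "i < n" "j < n" "l < n" using \<open>g \<in> V3 n\<close> by (auto simp: V3_def)
    then have "(i,j,l) \<in> {..<n}\<times>{..<n}\<times>{..<n}" by simp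
    then show ?thesis by (rule rev_image_eqI) (simp add: CCZg)
  qed
qed

lemma V2_fin: "finite (V2 n)" by (rule finite_subset[OF V2_sub]) auto
lemma V3_fin: "finite (V3 n)" by (rule finite_subset[OF V3_sub]) auto

lemma V2_card: "card (V2 n) \<le> n + n * n"
proof -
  have "card (V2 n) \<le> card (Zg ` {..<n} \<union> (\<lambda>(i,j). CZg i j) ` ({..<n}\<times>{..<n}))"
    by (rule card_mono[OF _ V2_sub]) auto
  also have "\<dots> \<le> card (Zg ` {..<n}) + card ((\<lambda>(i,j). CZg i j) ` ({..<n}\<times>{..<n}))"
    by (rule card_Un_le)
  also have "\<dots> \<le> card {..<n} + card ({..<n}\<times>{..<n})"
    by (intro add_mono card_image_le) auto
  finally show ?thesis by (simp add: card_cartesian_product)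
qed

lemma V3_card: "card (V3 n) \<le> n ^ 3"
proof -
  have "card (V3 n) \<le> card ((\<lambda>(i,j,l). CCZg i j l) ` ({..<n}\<times>{..<n}\<times>{..<n}))"
    by (rule card_mono[OF _ V3_sub]) auto
  also have "\<dots> \<le> card ({..<n}\<times>{..<n}\<times>{..<n})" by (rule card_image_le) auto
  finally show ?thesis by (simp add: card_cartesian_product power3_eq_cube)
qed

lemma KS_sub: "KS n k \<subseteq> (\<lambda>xs. {g. Some g \<in> set xs}) ` {xs. set xs \<subseteq> insert None (Some ` V3 n) \<and> length xs = k}"
proof
  fix B assume B: "B \<in> KS n k"
  hence Bs: "B \<subseteq> V3 n" "card B \<le> k" by (auto simp: KS_def)
  have "finite B" using Bs V3_fin finite_subset by blast
  then obtain ys where ys: "set ys = B" "distinct ys" using finite_distinct_list by blast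
  have ly: "length ys \<le> k" using Bs ys distinct_card by metis
  define xs where "xs = map Some ys @ replicate (k - length ys) None"
  have "length xs = k" using ly by (simp add: xs_def)
  moreover have "set xs \<subseteq> insert None (Some ` V3 n)" using ys Bs by (auto simp: xs_def)
  moreover have "{g. Some g \<in> set xs} = B" using ys by (auto simp: xs_def)
  ultimately show "B \<in> (\<lambda>xs. {g. Some g \<in> set xs}) ` {xs. set xs \<subseteq> insert None (Some ` V3 n) \<and> length xs = k}"
    by (intro rev_image_eqI[of xs]) auto
qed

lemma KS_fin: "finite (KS n k)"
  by (rule finite_subset[OF KS_sub]) (intro finite_imageI finite_lists_length_eq, use V3_fin in simp)

lemma KS_card: "card (KS n k) \<le> (n^3 + 1) ^ k"
proof -
  have "card (KS n k) \<le> card ((\<lambda>xs. {g. Some g \<in> set xs}) ` {xs. set xs \<subseteq> insert None (Some ` V3 n) \<and> length xs = k})"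
    by (rule card_mono[OF _ KS_sub]) (intro finite_imageI finite_lists_length_eq, use V3_fin in simp)
  also have "\<dots> \<le> card {xs. set xs \<subseteq> insert None (Some ` V3 n) \<and> length xs = k}"
    by (rule card_image_le) (intro finite_lists_length_eq, use V3_fin in simp)
  also have "\<dots> = (card (insert None (Some ` V3 n))) ^ k" by (rule card_lists_length_eq) (use V3_fin in simp)
  also have "card (insert None (Some ` V3 n)) = card (V3 n) + 1"
    using V3_fin by (simp add: card_image)
  also have "(card (V3 n) + 1) ^ k \<le> (n^3 + 1) ^ k"
    using V3_card by (intro power_mono) auto
  finally show ?thesis .
qed

lemma TS_sub: "TS n k \<subseteq> (\<lambda>(A,B). A \<union> B) ` (Pow (V2 n) \<times> KS n k)"
proof
  fix T assume T: "T \<in> TS n k"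
  have "T = {g\<in>T. \<not> is_CCZ g} \<union> {g\<in>T. is_CCZ g}" by auto
  moreover have "{g\<in>T. \<not> is_CCZ g} \<in> Pow (V2 n)" using T by (auto simp: TS_def V2_def)
  moreover have "{g\<in>T. is_CCZ g} \<in> KS n k" using T by (auto simp: TS_def V3_def KS_def)
  ultimately show "T \<in> (\<lambda>(A,B). A \<union> B) ` (Pow (V2 n) \<times> KS n k)"
    by (intro rev_image_eqI[of "({g\<in>T. \<not> is_CCZ g}, {g\<in>T. is_CCZ g})"]) auto
qed

lemma TS_fin: "finite (TS n k)"
  by (rule finite_subset[OF TS_sub]) (use V2_fin KS_fin in auto)

lemma TS_card: "card (TS n k) \<le> 2 ^ (n + n * n) * (n^3 + 1) ^ k"
proof -
  have "card (TS n k) \<le> card ((\<lambda>(A,B). A \<union> B) ` (Pow (V2 n) \<times> KS n k))"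
    by (rule card_mono[OF _ TS_sub]) (use V2_fin KS_fin in auto)
  also have "\<dots> \<le> card (Pow (V2 n) \<times> KS n k)" by (rule card_image_le) (use V2_fin KS_fin in auto)
  also have "\<dots> = 2 ^ card (V2 n) * card (KS n k)"
    using V2_fin by (simp add: card_cartesian_product card_Pow)
  also have "\<dots> \<le> 2 ^ (n + n * n) * (n^3 + 1) ^ k"
    using V2_card KS_card by (intro mult_mono power_increasing) auto
  finally show ?thesis .
qed


definition Fd :: "nat \<Rightarrow> gate set \<Rightarrow> (bool list \<times> bool list \<Rightarrow> real)" where
  "Fd n T = f_chan n (unitary_channel n (mmult n (mmult n (hadamard_n n)
      (sgnd (\<lambda>z. odd (card {g\<in>T. gate_phase g z})))) (hadamard_n n)))"

lemma F_sub: "F_class n (I_CCZ n k) \<subseteq> Fd n ` TS n k"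
proof
  fix f assume "f \<in> F_class n (I_CCZ n k)"
  then obtain gs where gs: "\<forall>g\<in>set gs. valid_gate n g" "length (filter is_CCZ gs) \<le> k"
    and f: "f = f_chan n (unitary_channel n (mmult n (mmult n (hadamard_n n) (circuit_mat n gs)) (hadamard_n n)))"
    unfolding F_class_def I_CCZ_def by blast
  have pe: "par gs = (\<lambda>z. odd (card {g\<in>oddset gs. gate_phase g z}))"
    unfolding par_def by (rule ext) (rule par_oddset)
  have "f = Fd n (oddset gs)"
    unfolding f Fd_def pe[symmetric]
    by (intro f_chan_agree agree_mmult agree_refl circuit_agree)
  moreover have "oddset gs \<in> TS n k"
  proof -
    have "oddset gs \<subseteq> {g. valid_gate n g}" using gs(1) by (auto simp: oddset_def)
    moreover have "card {g\<in>oddset gs. is_CCZ g} \<le> card (set (filter is_CCZ gs))"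
      by (rule card_mono) (auto simp: oddset_def)
    moreover have "card (set (filter is_CCZ gs)) \<le> length (filter is_CCZ gs)" by (rule card_length)
    ultimately show ?thesis using gs(2) by (auto simp: TS_def)
  qed
  ultimately show "f \<in> Fd n ` TS n k" by blast
qed

lemma F_fin: "finite (F_class n (I_CCZ n k))"
  by (rule finite_subset[OF F_sub]) (simp add: TS_fin)

lemma F_card: "card (F_class n (I_CCZ n k)) \<le> 2 ^ (n + n * n) * (n^3 + 1) ^ k"
proof -
  have "card (F_class n (I_CCZ n k)) \<le> card (Fd n ` TS n k)"
    by (rule card_mono[OF _ F_sub]) (simp add: TS_fin)
  also have "\<dots> \<le> card (TS n k)" by (rule card_image_le) (simp add: TS_fin)
  also have "\<dots> \<le> 2 ^ (n + n * n) * (n^3 + 1) ^ k" by (rule TS_card)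
  finally show ?thesis .
qed

lemma I_ne: "I_CCZ n k \<noteq> {}"
  unfolding I_CCZ_def by (auto intro!: exI[of _ "[]"])

lemma F_ne: "F_class n (I_CCZ n k) \<noteq> {}"
  using I_ne by (simp add: F_class_def)



lemma ln_count_bound:
  fixes n k :: nat and N :: nat
  assumes n: "n \<ge> 2" and N1: "N \<ge> 1" and NB: "N \<le> 2 ^ (n + n * n) * (n^3 + 1) ^ k"
  shows "ln (real N) \<le> 4 * (real n ^ 2 + real k * ln (real n))"
proof -
  have cube: "n^3 + 1 \<le> n^4"
  proof -
    have "n^4 = n * n^3" by (simp add: power_Suc[symmetric] del: power_Suc)
    also have "\<dots> \<ge> 2 * n^3" using n by (intro mult_right_mono) auto
    finally have "n^4 \<ge> 2 * n^3" .
    moreover have "n^3 \<ge> 1" using n by simp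
    ultimately show ?thesis by linarith
  qed
  have np: "real n > 0" using n by simp
  have "ln (real N) \<le> ln (real (2 ^ (n + n * n) * (n^3 + 1) ^ k))"
    using N1 NB by (subst ln_le_cancel_iff) (auto simp del: of_nat_mult of_nat_power)
  also have "\<dots> = real (n + n*n) * ln 2 + real k * ln (real (n^3 + 1))"
    using add_pos_nonneg[of "1::real" "real n ^ 3"] by (simp add: ln_mult ln_realpow del: of_nat_add)
  also have "\<dots> \<le> real (n + n*n) * 1 + real k * (4 * ln (real n))"
  proof (intro add_mono mult_left_mono)
    show "ln (2::real) \<le> 1" using ln_le_minus_one[of 2] by simp
    have "ln (real (n^3 + 1)) \<le> ln (real (n^4))"
      using cube n by (subst ln_le_cancel_iff) (auto simp del: of_nat_power of_nat_add)
    also have "\<dots> = 4 * ln (real n)" by (simp add: ln_realpow)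
    finally show "ln (real (n^3 + 1)) \<le> 4 * ln (real n)" .
  qed auto
  also have "\<dots> \<le> 4 * (real n ^ 2 + real k * ln (real n))"
  proof -
    have "real (n + n*n) \<le> 2 * real n ^ 2" using n by (simp add: power2_eq_square)
    moreover have "real n ^ 2 \<ge> 0" by simp
    ultimately have a: "real (n + n*n) \<le> 4 * real n ^ 2" by linarith
    have "real (n + n*n) * 1 + real k * (4 * ln (real n)) = real (n + n*n) + 4 * (real k * ln (real n))"
      by simp
    also have "\<dots> \<le> 4 * real n ^ 2 + 4 * (real k * ln (real n))" using a by (rule add_right_mono)
    also have "\<dots> = 4 * (real n ^ 2 + real k * ln (real n))" by (simp only: distrib_left)
    finally show ?thesis .
  qed
  finally show ?thesis .
qed


theorem mainTheorem9:
  shows "\<exists>C::real. \<forall>n k. \<forall>S :: (bool list \<times> bool list) list.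
     n \<ge> 2 \<longrightarrow> length S \<ge> 1 \<longrightarrow> set S \<subseteq> bv n \<times> bv n \<longrightarrow>
     emp_rademacher (F_class n (I_CCZ n k)) S
       \<le> C * sqrt (real n ^ 2 + real k * ln (real n)) / sqrt (real (length S))
           * (SUP \<Phi>\<in>I_CCZ n k. Max ((\<lambda>i. \<bar>f_chan n \<Phi> (S ! i)\<bar>) ` {..<length S}))"
proof (intro exI[of _ 3] allI impI)
  fix n k :: nat and S :: "(bool list \<times> bool list) list"
  assume n: "n \<ge> 2" and m: "length S \<ge> 1" and "set S \<subseteq> bv n \<times> bv n"
  define G where "G = F_class n (I_CCZ n k)"
  define H where "H g = Max ((\<lambda>i. \<bar>g (S ! i)\<bar>) ` {..<length S})" for g :: "bool list \<times> bool list \<Rightarrow> real"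
  define M where "M = (SUP \<Phi>\<in>I_CCZ n k. Max ((\<lambda>i. \<bar>f_chan n \<Phi> (S ! i)\<bar>) ` {..<length S}))"
  define X where "X = real n ^ 2 + real k * ln (real n)"
  have finG: "finite G" and neG: "G \<noteq> {}" unfolding G_def by (rule F_fin, rule F_ne)
  have Meq: "M = (SUP g\<in>G. H g)"
    unfolding M_def G_def F_class_def H_def by (simp add: image_image)
  have bdd: "bdd_above (H ` G)" using finG by (intro bdd_above_finite) simp
  have m0: "0 < length S" using m by linarith
  have bnd: "\<forall>g\<in>G. \<forall>i<length S. \<bar>g (S!i)\<bar> \<le> M"
  proof (intro ballI allI impI)
    fix g i assume g: "g \<in> G" and i: "i < length S"
    have "\<bar>g (S!i)\<bar> \<le> H g" unfolding H_def using i by (intro Max_ge) auto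
    also have "H g \<le> M" unfolding Meq using bdd g by (rule cSUP_upper2) simp
    finally show "\<bar>g (S!i)\<bar> \<le> M" .
  qed
  have M0: "M \<ge> 0"
  proof -
    obtain g where "g \<in> G" using neG by blast
    hence "\<bar>g (S!0)\<bar> \<le> M" using bnd m0 by blast
    thus ?thesis by (meson abs_ge_zero order_trans)
  qed
  have N1: "card G \<ge> 1" using finG neG by (simp add: Suc_le_eq card_gt_0_iff)
  have lnN: "ln (real (card G)) \<le> 4 * X"
    unfolding X_def G_def by (rule ln_count_bound[OF n]) (use N1 F_card in \<open>auto simp: G_def\<close>)
  have X0: "X \<ge> 0" using n unfolding X_def by (intro add_nonneg_nonneg mult_nonneg_nonneg) auto
  have sq: "sqrt (2 * ln (real (card G))) \<le> 3 * sqrt X"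
  proof -
    have "sqrt (2 * ln (real (card G))) \<le> sqrt (9 * X)" using lnN X0 by (intro real_sqrt_le_mono) linarith
    also have "\<dots> = 3 * sqrt X" by (simp add: real_sqrt_mult)
    finally show ?thesis .
  qed
  have "emp_rademacher G S \<le> M * sqrt (2 * ln (real (card G))) / sqrt (real (length S))"
    by (rule massart[OF finG neG m M0 bnd])
  also have "\<dots> \<le> M * (3 * sqrt X) / sqrt (real (length S))"
    using sq M0 by (intro divide_right_mono mult_left_mono) auto
  also have "\<dots> = 3 * sqrt X / sqrt (real (length S)) * M" by simp
  finally show "emp_rademacher (F_class n (I_CCZ n k)) S
       \<le> 3 * sqrt (real n ^ 2 + real k * ln (real n)) / sqrt (real (length S))
           * (SUP \<Phi>\<in>I_CCZ n k. Max ((\<lambda>i. \<bar>f_chan n \<Phi> (S ! i)\<bar>) ` {..<length S}))"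
    unfolding G_def X_def M_def .
qed


end
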